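(* There exist a measurable space $(X,\Sigma)$ and a transition function $p$ on it (with countably additive $p(x,\cdot)$) whose associated operator $A$ on $ba(X,\Sigma)$ has a cycle of measures $K=\{\mu_1,\dots,\mu_m\}$ of period $m\ge 2$ all of whose cyclic measures are purely finitely additive.
   Context: $X$ is an infinite set and $\Sigma$ a $\sigma$-algebra of subsets of $X$ containing all one-point sets. $ba(X,\Sigma)$ denotes the space of bounded finitely additive real-valued measures on $\Sigma$. A nonnegative finitely additive measure $\mu$ is purely finitely additive if every countably additive measure $\lambda$ with $0\le\lambda\le\mu$ is identically zero. A transition function is a map $p(x,E)$ with $0\le p(x,E)\le 1$, $p(x,X)=1$, $p(\cdot,E)$ bounded $\Sigma$-measurable for every $E\in\Sigma$, and $p(x,\cdot)$ countably additive for every $x\in X$. The Markov operator is $A\mu(E)=\int_X p(x,E)\,\mu(dx)$. A cycle of measures of $A$ is a finite numbered set $\{\mu_1,\dots,\mu_m\}$ of pairwise different positive finitely additive measures with $A\mu_i=\mu_{i+1}$ ($1\le i\le m-1$) and $A\mu_m=\mu_1$; $m$ is its period. *)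

theory Defs
  imports "HOL-Analysis.Analysis"
begin

definition standing_space :: "'a set \<Rightarrow> 'a set set \<Rightarrow> bool" where
  "standing_space X \<Sigma> \<longleftrightarrow> infinite X \<and> sigma_algebra X \<Sigma> \<and> (\<forall>x\<in>X. {x} \<in> \<Sigma>)"

definition fin_additive :: "'a set set \<Rightarrow> ('a set \<Rightarrow> real) \<Rightarrow> bool" where
  "fin_additive \<Sigma> \<mu> \<longleftrightarrow> \<mu> {} = 0 \<and>
     (\<forall>A\<in>\<Sigma>. \<forall>B\<in>\<Sigma>. A \<inter> B = {} \<longrightarrow> \<mu> (A \<union> B) = \<mu> A + \<mu> B)"

definition ba_measure :: "'a set set \<Rightarrow> ('a set \<Rightarrow> real) \<Rightarrow> bool" where
  "ba_measure \<Sigma> \<mu> \<longleftrightarrow> fin_additive \<Sigma> \<mu> \<and> (\<exists>B. \<forall>E\<in>\<Sigma>. \<bar>\<mu> E\<bar> \<le> B)"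

definition positive_ba :: "'a set set \<Rightarrow> ('a set \<Rightarrow> real) \<Rightarrow> bool" where
  "positive_ba \<Sigma> \<mu> \<longleftrightarrow> ba_measure \<Sigma> \<mu> \<and> (\<forall>E\<in>\<Sigma>. 0 \<le> \<mu> E)"

definition count_additive :: "'a set set \<Rightarrow> ('a set \<Rightarrow> real) \<Rightarrow> bool" where
  "count_additive \<Sigma> nu \<longleftrightarrow> fin_additive \<Sigma> nu \<and>
     (\<forall>F::nat \<Rightarrow> 'a set. range F \<subseteq> \<Sigma> \<longrightarrow> disjoint_family F \<longrightarrow>
        (\<lambda>n. nu (F n)) sums nu (\<Union>n. F n))"

definition purely_fin_additive :: "'a set set \<Rightarrow> ('a set \<Rightarrow> real) \<Rightarrow> bool" where
  "purely_fin_additive \<Sigma> \<mu> \<longleftrightarrow> positive_ba \<Sigma> \<mu> \<and>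
     (\<forall>nu. count_additive \<Sigma> nu \<and> (\<forall>E\<in>\<Sigma>. 0 \<le> nu E \<and> nu E \<le> \<mu> E)
            \<longrightarrow> (\<forall>E\<in>\<Sigma>. nu E = 0))"

definition transition_function :: "'a set \<Rightarrow> 'a set set \<Rightarrow> ('a \<Rightarrow> 'a set \<Rightarrow> real) \<Rightarrow> bool" where
  "transition_function X \<Sigma> p \<longleftrightarrow>
     (\<forall>x\<in>X. \<forall>E\<in>\<Sigma>. 0 \<le> p x E \<and> p x E \<le> 1) \<and>
     (\<forall>x\<in>X. p x X = 1) \<and>
     (\<forall>E\<in>\<Sigma>. \<forall>a::real. {x\<in>X. p x E \<le> a} \<in> \<Sigma>) \<and>
     (\<forall>x\<in>X. count_additive \<Sigma> (p x))"

text \<open>Integral of a bounded nonnegative measurable function with respect to a nonnegative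
  bounded finitely additive measure: supremum of lower sums over finite measurable partitions
  of X (this agrees with the usual integral on ba for such integrands).\<close>
definition fa_partitions :: "'a set \<Rightarrow> 'a set set \<Rightarrow> 'a set set set" where
  "fa_partitions X \<Sigma> = {P. finite P \<and> P \<subseteq> \<Sigma> - {{}} \<and> disjoint P \<and> \<Union>P = X}"

definition fa_integral :: "'a set \<Rightarrow> 'a set set \<Rightarrow> ('a set \<Rightarrow> real) \<Rightarrow> ('a \<Rightarrow> real) \<Rightarrow> real" where
  "fa_integral X \<Sigma> \<mu> f = (SUP P\<in>fa_partitions X \<Sigma>. \<Sum>E\<in>P. (INF x\<in>E. f x) * \<mu> E)"

definition markov_op :: "'a set \<Rightarrow> 'a set set \<Rightarrow> ('a \<Rightarrow> 'a set \<Rightarrow> real) \<Rightarrow> ('a set \<Rightarrow> real) \<Rightarrow> ('a set \<Rightarrow> real)" where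
  "markov_op X \<Sigma> p \<mu> = (\<lambda>E. fa_integral X \<Sigma> \<mu> (\<lambda>x. p x E))"

definition measure_cycle :: "'a set \<Rightarrow> 'a set set \<Rightarrow> ('a \<Rightarrow> 'a set \<Rightarrow> real) \<Rightarrow> nat \<Rightarrow> (nat \<Rightarrow> 'a set \<Rightarrow> real) \<Rightarrow> bool" where
  "measure_cycle X \<Sigma> p m \<mu> \<longleftrightarrow> m \<ge> 1 \<and>
     (\<forall>i\<in>{1..m}. positive_ba \<Sigma> (\<mu> i)) \<and>
     (\<forall>i\<in>{1..m}. \<forall>j\<in>{1..m}. i \<noteq> j \<longrightarrow> (\<exists>E\<in>\<Sigma>. \<mu> i E \<noteq> \<mu> j E)) \<and>
     (\<forall>i\<in>{1..<m}. \<forall>E\<in>\<Sigma>. markov_op X \<Sigma> p (\<mu> i) E = \<mu> (Suc i) E) \<and>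
     (\<forall>E\<in>\<Sigma>. markov_op X \<Sigma> p (\<mu> m) E = \<mu> 1 E)"

end

theory Submission
  imports Defs
begin

definition isfilt :: "nat set set \<Rightarrow> bool" where
  "isfilt F \<longleftrightarrow> UNIV \<in> F \<and> {} \<notin> F \<and> (\<forall>A B. A \<in> F \<longrightarrow> A \<subseteq> B \<longrightarrow> B \<in> F)
     \<and> (\<forall>A\<in>F. \<forall>B\<in>F. A \<inter> B \<in> F)"

definition ultra :: "nat set set \<Rightarrow> bool" where
  "ultra U \<longleftrightarrow> isfilt U \<and> (\<forall>A. A \<in> U \<or> - A \<in> U) \<and> (\<forall>n. {n} \<notin> U)"

definition um :: "nat set set \<Rightarrow> nat set \<Rightarrow> real" where
  "um U E = (if E \<in> U then 1 else 0)"

definition F0 :: "nat set set" where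
  "F0 = {A. \<exists>S. finite S \<and> {n. even n} - S \<subseteq> A}"

lemma inf_evens: "infinite {n::nat. even n}"
proof -
  have "range (\<lambda>n::nat. 2*n) = {n. even n}" by (auto elim: evenE)
  moreover have "inj (\<lambda>n::nat. 2*n)" by (auto simp: inj_def)
  ultimately show ?thesis using finite_imageD by (metis infinite_UNIV_nat)
qed

lemma F0_mem: "A \<in> F0 \<longleftrightarrow> (\<exists>S. finite S \<and> {n. even n} - S \<subseteq> A)"
  unfolding F0_def by simp

lemma F0_filt: "isfilt F0"
  unfolding isfilt_def
proof (intro conjI allI impI ballI)
  show "UNIV \<in> F0" unfolding F0_mem by (rule exI[of _ "{}"]) simp
  show "{} \<notin> F0"
  proof
    assume "{} \<in> F0"
    then obtain S where S: "finite S" "{n::nat. even n} - S \<subseteq> {}" unfolding F0_mem by blast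
    then have "{n::nat. even n} \<subseteq> S" by blast
    then have "finite {n::nat. even n}" using S(1) by (rule finite_subset)
    then show False using inf_evens by simp
  qed
next
  fix A B assume "A \<in> F0" "A \<subseteq> B"
  then obtain S where "finite S" "{n::nat. even n} - S \<subseteq> A" unfolding F0_mem by blast
  then show "B \<in> F0" unfolding F0_mem using \<open>A \<subseteq> B\<close> by blast
next
  fix A B assume "A \<in> F0" "B \<in> F0"
  then obtain S1 S2 where "finite S1" "finite S2" "{n::nat. even n} - S1 \<subseteq> A" "{n::nat. even n} - S2 \<subseteq> B"
    unfolding F0_mem by blast
  then have "finite (S1 \<union> S2)" "{n::nat. even n} - (S1 \<union> S2) \<subseteq> A \<inter> B" by auto
  then show "A \<inter> B \<in> F0" unfolding F0_mem by blast
qed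

lemma isfiltI:
  assumes "UNIV \<in> F" "{} \<notin> F" "\<And>A B. A \<in> F \<Longrightarrow> A \<subseteq> B \<Longrightarrow> B \<in> F"
    "\<And>A B. A \<in> F \<Longrightarrow> B \<in> F \<Longrightarrow> A \<inter> B \<in> F"
  shows "isfilt F"
  using assms unfolding isfilt_def by blast

lemma isfilt_UNIV: "isfilt F \<Longrightarrow> UNIV \<in> F" unfolding isfilt_def by blast
lemma isfilt_empty: "isfilt F \<Longrightarrow> {} \<notin> F" unfolding isfilt_def by blast
lemma isfilt_mono: "isfilt F \<Longrightarrow> A \<in> F \<Longrightarrow> A \<subseteq> B \<Longrightarrow> B \<in> F" unfolding isfilt_def by blast
lemma isfilt_Int: "isfilt F \<Longrightarrow> A \<in> F \<Longrightarrow> B \<in> F \<Longrightarrow> A \<inter> B \<in> F" unfolding isfilt_def by blast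

lemma exists_ultra: "\<exists>U. ultra U \<and> {n. even n} \<in> U"
proof -
  define \<A> where "\<A> = {F. isfilt F \<and> F0 \<subseteq> F}"
  have "\<forall>C\<in>chains \<A>. \<exists>U\<in>\<A>. \<forall>X\<in>C. X \<subseteq> U"
  proof
    fix C assume C: "C \<in> chains \<A>"
    show "\<exists>U\<in>\<A>. \<forall>X\<in>C. X \<subseteq> U"
    proof (cases "C = {}")
      case True then show ?thesis using F0_filt unfolding \<A>_def by auto
    next
      case False
      have sub: "\<And>X. X \<in> C \<Longrightarrow> isfilt X \<and> F0 \<subseteq> X"
        using C unfolding chains_def \<A>_def by blast
      have ch: "\<And>X Y. X \<in> C \<Longrightarrow> Y \<in> C \<Longrightarrow> X \<subseteq> Y \<or> Y \<subseteq> X"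
        using C unfolding chains_def chain_subset_def by blast
      obtain X0 where X0: "X0 \<in> C" using False by blast
      have "isfilt (\<Union>C)"
      proof (rule isfiltI)
        show "UNIV \<in> \<Union>C" using X0 sub isfilt_UNIV by blast
        show "{} \<notin> \<Union>C" using sub isfilt_empty by blast
        fix A B
        show "A \<in> \<Union>C \<Longrightarrow> A \<subseteq> B \<Longrightarrow> B \<in> \<Union>C"
        proof -
          assume "A \<in> \<Union>C" "A \<subseteq> B"
          then obtain X where "X \<in> C" "A \<in> X" by blast
          then have "B \<in> X" using sub isfilt_mono \<open>A \<subseteq> B\<close> by blast
          then show "B \<in> \<Union>C" using \<open>X \<in> C\<close> by blast
        qed
        assume "A \<in> \<Union>C" "B \<in> \<Union>C"
        then obtain X Y where XY: "X \<in> C" "Y \<in> C" "A \<in> X" "B \<in> Y" by blast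
        show "A \<inter> B \<in> \<Union>C"
        proof (cases "X \<subseteq> Y")
          case True
          then have "A \<inter> B \<in> Y" using XY sub isfilt_Int by blast
          then show ?thesis using XY by blast
        next
          case False
          then have "Y \<subseteq> X" using ch XY by blast
          then have "A \<inter> B \<in> X" using XY sub isfilt_Int by blast
          then show ?thesis using XY by blast
        qed
      qed
      moreover have "F0 \<subseteq> \<Union>C" using X0 sub by blast
      moreover have "\<forall>X\<in>C. X \<subseteq> \<Union>C" by blast
      ultimately show ?thesis unfolding \<A>_def by blast
    qed
  qed
  from Zorn_Lemma2[OF this] obtain M where M: "M \<in> \<A>" and max: "\<And>X. X\<in>\<A> \<Longrightarrow> M \<subseteq> X \<Longrightarrow> X = M"
    by blast
  have Mf: "isfilt M" and F0M: "F0 \<subseteq> M" using M unfolding \<A>_def by auto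
  have ult: "A \<in> M \<or> - A \<in> M" for A
  proof (cases "\<exists>C\<in>M. C \<inter> A = {}")
    case True
    then obtain C where "C \<in> M" "C \<subseteq> - A" by blast
    then show ?thesis using Mf isfilt_mono by blast
  next
    case False
    define M' where "M' = {B. \<exists>C\<in>M. C \<inter> A \<subseteq> B}"
    have "isfilt M'"
    proof (rule isfiltI)
      show "UNIV \<in> M'" using isfilt_UNIV[OF Mf] unfolding M'_def by blast
      show "{} \<notin> M'" using False unfolding M'_def by blast
      fix B1 B2
      show "B1 \<in> M' \<Longrightarrow> B1 \<subseteq> B2 \<Longrightarrow> B2 \<in> M'" unfolding M'_def by blast
      assume "B1 \<in> M'" "B2 \<in> M'"
      then obtain C1 C2 where C: "C1 \<in> M" "C2 \<in> M" "C1 \<inter> A \<subseteq> B1" "C2 \<inter> A \<subseteq> B2"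
        unfolding M'_def by blast
      have "C1 \<inter> C2 \<in> M" using isfilt_Int[OF Mf C(1,2)] .
      moreover have "(C1 \<inter> C2) \<inter> A \<subseteq> B1 \<inter> B2" using C by blast
      ultimately show "B1 \<inter> B2 \<in> M'" unfolding M'_def by blast
    qed
    moreover have "M \<subseteq> M'" unfolding M'_def by blast
    ultimately have "M' \<in> \<A>" using F0M unfolding \<A>_def by blast
    then have "M' = M" using max \<open>M \<subseteq> M'\<close> by blast
    moreover have "A \<in> M'" unfolding M'_def using isfilt_UNIV[OF Mf] by blast
    ultimately show ?thesis by simp
  qed
  have "{n. even n} - {} \<in> F0" unfolding F0_mem by blast
  then have ev: "{n. even n} \<in> M" using F0M by auto
  have free: "{n} \<notin> M" for n
  proof
    assume "{n} \<in> M"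
    moreover have "{m. even m} - {n} \<in> F0" unfolding F0_mem by blast
    then have "{m. even m} - {n} \<in> M" using F0M by blast
    ultimately have "{n} \<inter> ({m. even m} - {n}) \<in> M" using isfilt_Int[OF Mf] by blast
    then show False using isfilt_empty[OF Mf] by simp
  qed
  show ?thesis using Mf ult free ev unfolding ultra_def by blast
qed

lemma ultra_disj: "ultra U \<Longrightarrow> A \<in> U \<Longrightarrow> B \<in> U \<Longrightarrow> A \<inter> B = {} \<Longrightarrow> False"
  unfolding ultra_def isfilt_def by metis

lemma ultra_un: "ultra U \<Longrightarrow> A \<union> B \<in> U \<Longrightarrow> A \<in> U \<or> B \<in> U"
proof (rule ccontr)
  assume u: "ultra U" "A \<union> B \<in> U" "\<not> (A \<in> U \<or> B \<in> U)"
  then have "- A \<in> U" "- B \<in> U" unfolding ultra_def by auto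
  then have "- A \<inter> - B \<in> U" using u unfolding ultra_def isfilt_def by blast
  then show False using ultra_disj[OF u(1) u(2)] by blast
qed

lemma ultra_fin: assumes U: "ultra U" shows "finite P \<Longrightarrow> \<Union>P \<in> U \<Longrightarrow> \<exists>E\<in>P. E \<in> U"
proof (induction P rule: finite_induct)
  case empty then show ?case using U unfolding ultra_def isfilt_def by auto
next
  case (insert x F)
  then show ?case using ultra_un[OF U, of x "\<Union>F"] by auto
qed

lemma ultra_UNIV: "ultra U \<Longrightarrow> UNIV \<in> U" unfolding ultra_def isfilt_def by auto
lemma ultra_empty: "ultra U \<Longrightarrow> {} \<notin> U" unfolding ultra_def isfilt_def by auto
lemma ultra_mono: "ultra U \<Longrightarrow> A \<in> U \<Longrightarrow> A \<subseteq> B \<Longrightarrow> B \<in> U" unfolding ultra_def isfilt_def by auto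

lemma integral_um:
  assumes U: "ultra U"
  shows "fa_integral UNIV UNIV (um U) (\<lambda>x. if x \<in> S then 1 else 0) = um U S"
proof -
  define f :: "nat \<Rightarrow> real" where "f = (\<lambda>x. if x \<in> S then 1 else 0)"
  define val where "val = (\<lambda>P. \<Sum>E\<in>P. (INF x\<in>E. f x) * um U E)"
  have key: "\<exists>E0\<in>P. E0 \<in> U \<and> val P = (if E0 \<subseteq> S then 1 else 0)"
    if P: "P \<in> fa_partitions UNIV UNIV" for P
  proof -
    have fin: "finite P" and ne: "{} \<notin> P" and dj: "disjoint P" and un: "\<Union>P = UNIV"
      using P unfolding fa_partitions_def by auto
    obtain E0 where E0: "E0 \<in> P" "E0 \<in> U" using ultra_fin[OF U fin] un ultra_UNIV[OF U] by auto
    have umE: "um U E = (if E = E0 then 1 else 0)" if "E \<in> P" for E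
    proof (cases "E = E0")
      case True then show ?thesis using E0 unfolding um_def by simp
    next
      case False
      then have "E \<inter> E0 = {}" using dj that E0 unfolding disjoint_def pairwise_def disjnt_def by blast
      then have "E \<notin> U" using ultra_disj[OF U _ E0(2)] by blast
      then show ?thesis using False unfolding um_def by simp
    qed
    have "val P = (\<Sum>E\<in>P. if E = E0 then (INF x\<in>E. f x) else 0)"
      unfolding val_def by (rule sum.cong) (auto simp: umE)
    also have "\<dots> = (INF x\<in>E0. f x)" using fin E0 by (simp add: sum.delta')
    also have "\<dots> = (if E0 \<subseteq> S then 1 else 0)"
    proof (cases "E0 \<subseteq> S")
      case True
      have "E0 \<noteq> {}" using ne E0 by auto
      have "(INF x\<in>E0. f x) = (INF x\<in>E0. 1)" using True unfolding f_def
        by (intro INF_cong) auto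
      also have "\<dots> = 1" using \<open>E0 \<noteq> {}\<close> by simp
      finally show ?thesis using True by simp
    next
      case False
      then obtain x where x: "x \<in> E0" "x \<notin> S" by auto
      have bdd: "bdd_below (f ` E0)" unfolding f_def by (rule bdd_belowI[of _ 0]) auto
      have "(INF x\<in>E0. f x) \<le> f x" using x bdd by (intro cINF_lower) auto
      moreover have "0 \<le> (INF x\<in>E0. f x)" using x unfolding f_def
        by (intro cINF_greatest) auto
      ultimately show ?thesis using x False unfolding f_def by simp
    qed
    finally show ?thesis using E0 by blast
  qed
  have le: "v \<le> um U S" if v_in: "v \<in> val ` fa_partitions UNIV UNIV" for v
  proof -
    obtain P where P: "P \<in> fa_partitions UNIV UNIV" "v = val P" using v_in by blast
    obtain E0 where "E0 \<in> P" "E0 \<in> U" "val P = (if E0 \<subseteq> S then 1 else 0)" using key[OF P(1)] by blast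
    then show ?thesis using P ultra_mono[OF U] unfolding um_def by auto
  qed
  have mem: "um U S \<in> val ` fa_partitions UNIV UNIV"
  proof (cases "S \<in> U")
    case True
    define P1 where "P1 = {S, - S} - {{}}"
    have P1: "P1 \<in> fa_partitions UNIV UNIV"
      unfolding fa_partitions_def P1_def disjoint_def pairwise_def disjnt_def by auto
    obtain E0 where E0: "E0 \<in> P1" "E0 \<in> U" "val P1 = (if E0 \<subseteq> S then 1 else 0)" using key[OF P1] by blast
    have "E0 = S \<or> E0 = - S" using E0 unfolding P1_def by auto
    moreover have "- S \<notin> U" using ultra_disj[OF U True] by blast
    ultimately have "E0 = S" using E0 by auto
    then have "val P1 = um U S" using E0 True unfolding um_def by simp
    then show ?thesis using P1 by (metis image_eqI)
  next
    case False
    have P2: "{UNIV} \<in> fa_partitions UNIV UNIV"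
      unfolding fa_partitions_def disjoint_def pairwise_def disjnt_def by auto
    obtain E0 where E0: "E0 \<in> {UNIV}" "val {UNIV} = (if E0 \<subseteq> S then 1 else 0)" using key[OF P2] by blast
    have "\<not> UNIV \<subseteq> S" using False ultra_UNIV[OF U] by (metis top.extremum_uniqueI)
    then have "val {UNIV} = um U S" using E0 False unfolding um_def by simp
    then show ?thesis using P2 by (metis image_eqI)
  qed
  have "fa_integral UNIV UNIV (um U) f = Sup (val ` fa_partitions UNIV UNIV)"
    unfolding fa_integral_def val_def by simp
  also have "\<dots> = um U S" by (rule cSup_eq_maximum[OF mem le])
  finally show ?thesis unfolding f_def .
qed

lemma um_add:
  assumes U: "ultra U" and d: "A \<inter> B = {}"
  shows "um U (A \<union> B) = um U A + um U B"
proof (cases "A \<in> U")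
  case True
  then have "B \<notin> U" using ultra_disj[OF U True _ d] by blast
  moreover have "A \<union> B \<in> U" using ultra_mono[OF U True] by blast
  ultimately show ?thesis using True unfolding um_def by simp
next
  case False
  show ?thesis
  proof (cases "B \<in> U")
    case True
    moreover have "A \<union> B \<in> U" using ultra_mono[OF U True] by blast
    ultimately show ?thesis using False unfolding um_def by simp
  next
    case F2: False
    then have "A \<union> B \<notin> U" using ultra_un[OF U] False by blast
    then show ?thesis using False F2 unfolding um_def by simp
  qed
qed

lemma purely_um:
  assumes U: "ultra U"
  shows "purely_fin_additive UNIV (um U)"
  unfolding purely_fin_additive_def
proof (intro conjI allI impI)
  show "positive_ba UNIV (um U)"
    unfolding positive_ba_def ba_measure_def fin_additive_def
  proof (intro conjI ballI impI)
    show "um U {} = 0" using ultra_empty[OF U] unfolding um_def by simp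
    fix A B :: "nat set" assume "A \<inter> B = {}"
    then show "um U (A \<union> B) = um U A + um U B" by (rule um_add[OF U])
  next
    show "\<exists>B. \<forall>E\<in>UNIV. \<bar>um U E\<bar> \<le> B" by (rule exI[of _ 1]) (simp add: um_def)
    fix E show "0 \<le> um U E" by (simp add: um_def)
  qed
next
  fix nu :: "nat set \<Rightarrow> real"
  assume a: "count_additive UNIV nu \<and> (\<forall>E\<in>UNIV. 0 \<le> nu E \<and> nu E \<le> um U E)"
  have bnd: "\<And>E. 0 \<le> nu E \<and> nu E \<le> um U E" using a by blast
  have z: "nu {} = 0" using a unfolding count_additive_def fin_additive_def by blast
  have ca: "\<And>F. disjoint_family F \<Longrightarrow> (\<lambda>n. nu (F n)) sums nu (\<Union>n. F n)"
    using a unfolding count_additive_def by blast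
  have sing: "nu {n} = 0" for n
  proof -
    have "{n} \<notin> U" using U unfolding ultra_def by blast
    then have "um U {n} = 0" unfolding um_def by simp
    then show ?thesis using bnd[of "{n}"] by linarith
  qed
  show "\<forall>E\<in>UNIV. nu E = 0"
  proof
    fix E :: "nat set"
    define F where "F = (\<lambda>n. if n \<in> E then {n} else ({}::nat set))"
    have F0: "\<And>n. nu (F n) = 0" unfolding F_def using z sing by simp
    have dj: "disjoint_family F" unfolding disjoint_family_on_def F_def by auto
    have un: "(\<Union>n. F n) = E" unfolding F_def by (auto split: if_splits)
    have "(\<lambda>n. nu (F n)) sums nu E" using ca[OF dj] un by simp
    then have "(\<lambda>n. 0::real) sums nu E" using F0 by simp
    then show "nu E = 0" using sums_zero sums_unique2 by blast
  qed
qed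

definition sw :: "nat \<Rightarrow> nat" where "sw n = (if even n then Suc n else n - 1)"

lemma sw_sw: "sw (sw n) = n"
  unfolding sw_def by (cases "even n") auto

lemma sw_vimage: "sw -` (sw -` E) = E"
  using sw_sw by auto

definition pt :: "nat \<Rightarrow> nat set \<Rightarrow> real" where "pt x E = (if sw x \<in> E then 1 else 0)"

lemma markov_um: "ultra U \<Longrightarrow> markov_op UNIV UNIV pt (um U) E = um U (sw -` E)"
  unfolding markov_op_def pt_def using integral_um[of U "sw -` E"] by simp

lemma ultra_image: assumes M: "ultra M" shows "ultra {E. sw -` E \<in> M}"
  unfolding ultra_def isfilt_def
proof (intro conjI allI ballI impI)
  show "UNIV \<in> {E. sw -` E \<in> M}" using ultra_UNIV[OF M] by simp
  show "{} \<notin> {E. sw -` E \<in> M}" using ultra_empty[OF M] by simp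
  fix A B :: "nat set"
  show "A \<in> {E. sw -` E \<in> M} \<Longrightarrow> A \<subseteq> B \<Longrightarrow> B \<in> {E. sw -` E \<in> M}"
    using ultra_mono[OF M] by (simp add: vimage_mono)
  show "A \<in> {E. sw -` E \<in> M} \<or> - A \<in> {E. sw -` E \<in> M}" using M unfolding ultra_def
    by (simp add: vimage_Compl)
next
  fix A B assume "A \<in> {E. sw -` E \<in> M}" "B \<in> {E. sw -` E \<in> M}"
  then have "sw -` A \<inter> sw -` B \<in> M" using M unfolding ultra_def using isfilt_Int by blast
  then show "A \<inter> B \<in> {E. sw -` E \<in> M}" by simp
next
  fix n
  have "sw -` {n} = {sw n}" using sw_sw by auto
  then show "{n} \<notin> {E. sw -` E \<in> M}" using M unfolding ultra_def by simp
qed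

lemma trans_pt: "transition_function UNIV UNIV pt"
  unfolding transition_function_def
proof (intro conjI ballI allI)
  fix x :: nat and E :: "nat set"
  show "0 \<le> pt x E" "pt x E \<le> 1" by (auto simp: pt_def)
next
  fix x :: nat show "pt x UNIV = 1" by (simp add: pt_def)
next
  fix E :: "nat set" and a :: real show "{x \<in> UNIV. pt x E \<le> a} \<in> UNIV" by simp
next
  fix x :: nat
  show "count_additive UNIV (pt x)"
    unfolding count_additive_def fin_additive_def
  proof (intro conjI ballI impI allI)
    show "pt x {} = 0" by (simp add: pt_def)
    fix A B :: "nat set" assume "A \<inter> B = {}"
    then show "pt x (A \<union> B) = pt x A + pt x B" by (auto simp: pt_def)
  next
    fix F :: "nat \<Rightarrow> nat set" assume "disjoint_family F"
    show "(\<lambda>n. pt x (F n)) sums pt x (\<Union>n. F n)"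
    proof (cases "\<exists>n. sw x \<in> F n")
      case True
      then obtain n0 where n0: "sw x \<in> F n0" by auto
      have "pt x (F n) = (if n = n0 then pt x (F n) else 0)" for n
      proof (cases "n = n0")
        case False
        then have "F n \<inter> F n0 = {}" using \<open>disjoint_family F\<close> unfolding disjoint_family_on_def by blast
        then have "sw x \<notin> F n" using n0 by blast
        then show ?thesis using False unfolding pt_def by simp
      qed simp
      then have "(\<lambda>n. pt x (F n)) = (\<lambda>n. if n = n0 then pt x (F n) else 0)" by (rule ext)
      moreover have "pt x (\<Union>n. F n) = pt x (F n0)" using n0 by (auto simp: pt_def)
      ultimately show ?thesis by (metis sums_single)
    next
      case False
      then show ?thesis by (simp add: pt_def)
    qed
  qed
qed

theorem proposition4p1:
  shows "\<exists>(X::nat set) \<Sigma> p m \<mu>. standing_space X \<Sigma> \<and> transition_function X \<Sigma> p \<and>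
           measure_cycle X \<Sigma> p m \<mu> \<and> m \<ge> 2 \<and>
           (\<forall>i\<in>{1..m}. purely_fin_additive \<Sigma> (\<mu> i))"
proof -
  obtain M where M: "ultra M" and ev: "{n. even n} \<in> M" using exists_ultra by blast
  define V where "V = {E. sw -` E \<in> M}"
  have V: "ultra V" unfolding V_def by (rule ultra_image[OF M])
  define \<mu> where "\<mu> = (\<lambda>i::nat. if i = 1 then um M else um V)"
  have ss: "standing_space UNIV (UNIV :: nat set set)"
    unfolding standing_space_def using sigma_algebra_Pow[of "UNIV::nat set"] by simp
  have pure: "\<forall>i\<in>{1..2}. purely_fin_additive UNIV (\<mu> i)"
    using purely_um[OF M] purely_um[OF V] unfolding \<mu>_def by auto
  have "sw -` {n. even n} = - {n. even n}" unfolding sw_def by auto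
  then have nV: "{n. even n} \<notin> V" using ultra_disj[OF M ev] unfolding V_def by auto
  have m1: "markov_op UNIV UNIV pt (um M) E = um V E" for E
    using markov_um[OF M] unfolding um_def V_def by simp
  have m2: "markov_op UNIV UNIV pt (um V) E = um M E" for E
    using markov_um[OF V] sw_vimage unfolding um_def V_def by simp
  have cyc: "measure_cycle UNIV UNIV pt 2 \<mu>"
    unfolding measure_cycle_def
  proof (intro conjI ballI impI)
    show "1 \<le> (2::nat)" by simp
    fix i assume "i \<in> {1..2::nat}"
    then show "positive_ba UNIV (\<mu> i)" using pure unfolding purely_fin_additive_def by auto
  next
    fix i j assume ij: "i \<in> {1..2::nat}" "j \<in> {1..2::nat}" "i \<noteq> j"
    have "um M {n. even n} \<noteq> um V {n. even n}" using ev nV unfolding um_def by simp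
    have "(i = 1 \<and> j = 2) \<or> (i = 2 \<and> j = 1)" using ij by auto
    then have "\<mu> i {n. even n} \<noteq> \<mu> j {n. even n}" using \<open>um M {n. even n} \<noteq> um V {n. even n}\<close>
      unfolding \<mu>_def by auto
    then show "\<exists>E\<in>UNIV. \<mu> i E \<noteq> \<mu> j E" by blast
  next
    fix i E assume "i \<in> {1..<2::nat}"
    then have "i = 1" by auto
    then show "markov_op UNIV UNIV pt (\<mu> i) E = \<mu> (Suc i) E" unfolding \<mu>_def using m1 by simp
  next
    fix E show "markov_op UNIV UNIV pt (\<mu> 2) E = \<mu> 1 E" unfolding \<mu>_def using m2 by simp
  qed
  show ?thesis using ss trans_pt cyc pure by blast
qed

end
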